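(* Let $\tau$ be a $\theta$-compatible stopping time with $\mathbb E_x\tau<\infty$ for all $x\in\mathbf X$, and let $\nu$ be a non-zero $Q$-invariant Borel measure on $\mathbf X$. Then $R^\star\nu$ is a non-zero $P$-invariant measure on $\mathbf X$, $S^\star R^\star\nu=\nu$, and $\nu$ is absolutely continuous with respect to $R^\star\nu$. Moreover, if the function $QR\mathbf 1$ is bounded on $\mathbf X$, then $R^\star\nu$ is finite if and only if $\nu$ is finite.
   Context: $\mathbf X$ complete separable metric space with Borel $\sigma$-algebra; $(X_n)$ a Markov chain, $\mathbb P_x$ its law started at $x$, $Pf(x)=\mathbb E_xf(X_1)$. $\theta$-compatible: $\mathbb P_x(\tau=0)=0$ for all $x$ and $\mathbb P_x$-a.s. $\tau\ge2\Rightarrow\tau\circ\theta=\tau-1$. For non-negative Borel $f$: $Qf(x)=\mathbb E_x[f(X_\tau)\mathbf 1_{\tau<\infty}]$, $Sf(x)=\mathbb E_x[f(X_1)\mathbf 1_{\tau=1}]$, $Rf(x)=\mathbb E_x[(f(X_0)+\dots+f(X_{\tau-1}))\mathbf 1_{\tau<\infty}]$. For a measure $m$, $S^\star m(A)=\int S\mathbf 1_A\,dm$ and $R^\star m(A)=\int R\mathbf 1_A\,dm$. A measure $m$ is $T$-invariant ($T=P$ or $Q$) if $\int T\mathbf 1_A\,dm=m(A)$ for all Borel $A$. *)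

theory Defs
  imports "HOL-Probability.Probability"
begin

text \<open>Path space: streams \<omega> = X_0 ## X_1 ## ..., with X_n \<omega> = \<omega> !! n.\<close>

abbreviation pathS :: "'a::topological_space stream measure" where
  "pathS \<equiv> stream_space borel"

text \<open>Markov chain law: P x is the law of the chain started at x, with one-step kernel K.
  The fixed-point equation characterises the Markov chain law uniquely.\<close>
definition markov_law :: "('a::topological_space \<Rightarrow> 'a measure) \<Rightarrow> ('a \<Rightarrow> 'a stream measure) \<Rightarrow> bool" where
  "markov_law K P \<longleftrightarrow>
     K \<in> borel \<rightarrow>\<^sub>M prob_algebra borel \<and>
     P \<in> borel \<rightarrow>\<^sub>M prob_algebra pathS \<and>
     (\<forall>x. P x = K x \<bind> (\<lambda>y. distr (P y) pathS (\<lambda>\<omega>. x ## \<omega>)))"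

definition nat_filtration :: "enat \<Rightarrow> 'a::topological_space stream measure" where
  "nat_filtration n = sigma (space pathS)
     {(\<lambda>\<omega>. \<omega> !! i) -` A \<inter> space pathS | i A. enat i \<le> n \<and> A \<in> sets borel}"

definition theta_compatible :: "('a::topological_space \<Rightarrow> 'a stream measure) \<Rightarrow> ('a stream \<Rightarrow> enat) \<Rightarrow> bool" where
  "theta_compatible P \<tau> \<longleftrightarrow>
     (\<forall>x. \<P>(\<omega> in P x. \<tau> \<omega> = 0) = 0) \<and>
     (\<forall>x. AE \<omega> in P x. \<tau> \<omega> \<ge> 2 \<longrightarrow> \<tau> (stl \<omega>) = \<tau> \<omega> - 1)"

definition opP :: "('a \<Rightarrow> 'a stream measure) \<Rightarrow> ('a \<Rightarrow> ennreal) \<Rightarrow> 'a \<Rightarrow> ennreal" where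
  "opP P f x = (\<integral>\<^sup>+\<omega>. f (\<omega> !! 1) \<partial>P x)"

definition opQ :: "('a \<Rightarrow> 'a stream measure) \<Rightarrow> ('a stream \<Rightarrow> enat) \<Rightarrow> ('a \<Rightarrow> ennreal) \<Rightarrow> 'a \<Rightarrow> ennreal" where
  "opQ P \<tau> f x = (\<integral>\<^sup>+\<omega>. f (\<omega> !! the_enat (\<tau> \<omega>)) * indicator {\<omega>. \<tau> \<omega> < \<infinity>} \<omega> \<partial>P x)"

definition opS :: "('a \<Rightarrow> 'a stream measure) \<Rightarrow> ('a stream \<Rightarrow> enat) \<Rightarrow> ('a \<Rightarrow> ennreal) \<Rightarrow> 'a \<Rightarrow> ennreal" where
  "opS P \<tau> f x = (\<integral>\<^sup>+\<omega>. f (\<omega> !! 1) * indicator {\<omega>. \<tau> \<omega> = 1} \<omega> \<partial>P x)"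

definition opR :: "('a \<Rightarrow> 'a stream measure) \<Rightarrow> ('a stream \<Rightarrow> enat) \<Rightarrow> ('a \<Rightarrow> ennreal) \<Rightarrow> 'a \<Rightarrow> ennreal" where
  "opR P \<tau> f x = (\<integral>\<^sup>+\<omega>. (\<Sum>i<the_enat (\<tau> \<omega>). f (\<omega> !! i)) * indicator {\<omega>. \<tau> \<omega> < \<infinity>} \<omega> \<partial>P x)"

definition star_op :: "(('a::topological_space \<Rightarrow> ennreal) \<Rightarrow> 'a \<Rightarrow> ennreal) \<Rightarrow> 'a measure \<Rightarrow> 'a measure" where
  "star_op T m = measure_of (space borel) (sets borel) (\<lambda>A. \<integral>\<^sup>+x. T (indicator A) x \<partial>m)"

definition invariant_for :: "(('a::topological_space \<Rightarrow> ennreal) \<Rightarrow> 'a \<Rightarrow> ennreal) \<Rightarrow> 'a measure \<Rightarrow> bool" where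
  "invariant_for T m \<longleftrightarrow> (\<forall>A \<in> sets borel. (\<integral>\<^sup>+x. T (indicator A) x \<partial>m) = emeasure m A)"

end

theory Submission imports Defs begin

definition gen :: "('a::topological_space \<Rightarrow> 'a stream measure) \<Rightarrow> (nat \<Rightarrow> 'a stream \<Rightarrow> ennreal) \<Rightarrow> ('a \<Rightarrow> ennreal) \<Rightarrow> 'a \<Rightarrow> ennreal" where
  "gen P c f x = (\<integral>\<^sup>+\<omega>. (\<Sum>i. c i \<omega> * f (\<omega> !! i)) \<partial>P x)"

locale mk =
  fixes K :: "'a::polish_space \<Rightarrow> 'a measure"
    and P :: "'a \<Rightarrow> 'a stream measure"
    and \<tau> :: "'a stream \<Rightarrow> enat"
  assumes chain: "markov_law K P"
    and stop: "stopping_time nat_filtration \<tau>"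
    and compat: "theta_compatible P \<tau>"
    and fin: "\<And>x. AE \<omega> in P x. \<tau> \<omega> \<noteq> \<infinity>"
begin

lemma Pm: "P \<in> borel \<rightarrow>\<^sub>M subprob_algebra pathS"
  using chain unfolding markov_law_def by (auto intro: measurable_prob_algebraD)

lemma Km: "K \<in> borel \<rightarrow>\<^sub>M subprob_algebra borel"
  using chain unfolding markov_law_def by (auto intro: measurable_prob_algebraD)

lemma Pspace_alg: "P x \<in> space (prob_algebra pathS)"
proof -
  have "P \<in> borel \<rightarrow>\<^sub>M prob_algebra pathS" using chain unfolding markov_law_def by blast
  from measurable_space[OF this, of x] show ?thesis by simp
qed

lemma Kspace_alg: "K x \<in> space (prob_algebra borel)"
proof -
  have "K \<in> borel \<rightarrow>\<^sub>M prob_algebra borel" using chain unfolding markov_law_def by blast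
  from measurable_space[OF this, of x] show ?thesis by simp
qed

lemma Psets[measurable_cong]: "sets (P x) = sets pathS"
  using Pspace_alg[of x] unfolding space_prob_algebra by blast

lemma Pprob: "prob_space (P x)"
  using Pspace_alg[of x] unfolding space_prob_algebra by blast

lemma Ksets[measurable_cong]: "sets (K x) = sets borel"
  using Kspace_alg[of x] unfolding space_prob_algebra by blast

lemma Pspace[simp]: "space (P x) = UNIV"
  using sets_eq_imp_space_eq[OF Psets] by (simp add: space_stream_space)

lemma Kspace[simp]: "space (K x) = UNIV"
  using sets_eq_imp_space_eq[OF Ksets] by simp

lemma Pfix: "P x = K x \<bind> (\<lambda>y. distr (P y) pathS (\<lambda>\<omega>. x ## \<omega>))"
  using chain unfolding markov_law_def by blast

lemma kern_m: "(\<lambda>y. distr (P y) pathS (\<lambda>\<omega>. x ## \<omega>)) \<in> borel \<rightarrow>\<^sub>M subprob_algebra pathS"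
  by (rule measurable_compose[OF Pm measurable_distr]) simp

lemma bind_int:
  assumes F[measurable]: "F \<in> borel_measurable pathS"
  shows "(\<integral>\<^sup>+\<omega>. F \<omega> \<partial>P x) = (\<integral>\<^sup>+y. (\<integral>\<^sup>+\<omega>. F (x ## \<omega>) \<partial>P y) \<partial>K x)"
proof -
  have "(\<integral>\<^sup>+\<omega>. F \<omega> \<partial>P x) = (\<integral>\<^sup>+\<omega>. F \<omega> \<partial>(K x \<bind> (\<lambda>y. distr (P y) pathS (\<lambda>\<omega>. x ## \<omega>))))"
    using Pfix[of x] by simp
  also have "\<dots> = (\<integral>\<^sup>+y. (\<integral>\<^sup>+\<omega>. F \<omega> \<partial>distr (P y) pathS (\<lambda>\<omega>. x ## \<omega>)) \<partial>K x)"
    by (rule nn_integral_bind[OF F measurable_compose[OF _ kern_m]]) (simp add: measurable_ident_sets[OF Ksets])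
  also have "\<dots> = (\<integral>\<^sup>+y. (\<integral>\<^sup>+\<omega>. F (x ## \<omega>) \<partial>P y) \<partial>K x)"
    by (intro nn_integral_cong nn_integral_distr) (auto simp: measurable_ident_sets[OF Psets])
  finally show ?thesis .
qed

lemma Pm_int[measurable]:
  assumes F[measurable]: "F \<in> borel_measurable pathS"
  shows "(\<lambda>x. \<integral>\<^sup>+\<omega>. F \<omega> \<partial>P x) \<in> borel_measurable borel"
  by (rule measurable_compose[OF Pm nn_integral_measurable_subprob_algebra[OF F]])

lemma filt_sets: "sets (nat_filtration t) \<subseteq> sets pathS"
  unfolding nat_filtration_def
  by (rule order_trans[OF sets_measure_of_conv[THEN eq_refl]]) 
     (auto intro!: sets.sigma_sets_subset measurable_sets[OF measurable_snth])

lemma filt_space: "space (nat_filtration t) = space pathS"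
  unfolding nat_filtration_def by (rule space_measure_of) (auto dest: sets.sets_into_space[OF measurable_sets[OF measurable_snth]])

lemma tau_borel: "\<tau> \<in> pathS \<rightarrow>\<^sub>M borel"
  by (rule measurable_stopping_time[OF stop filt_sets filt_space])

lemma tau_m[measurable]: "\<tau> \<in> pathS \<rightarrow>\<^sub>M count_space UNIV"
  unfolding measurable_count_space_eq2_countable
  using measurable_sets[OF tau_borel borel_closed[OF closed_singleton]] by auto

lemma tau_set[measurable]: "{\<omega>. Q (\<tau> \<omega>)} \<in> sets pathS"
  using measurable_sets[OF tau_m, of "{a. Q a}"] by (simp add: space_stream_space vimage_def)

end

context mk
begin

lemma sets_star: "sets (star_op T m) = sets borel"
  using sets.sigma_sets_eq[of borel] by (simp add: star_op_def sets_measure_of_conv)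

lemma space_star[simp]: "space (star_op T m) = UNIV"
  unfolding star_op_def by (simp add: space_measure_of_conv)

context
  fixes c :: "nat \<Rightarrow> 'a stream \<Rightarrow> ennreal"
  assumes cm[measurable]: "\<And>i. c i \<in> borel_measurable pathS"
begin

lemma gen_integrand[measurable]:
  assumes [measurable]: "f \<in> borel_measurable borel"
  shows "(\<lambda>\<omega>. \<Sum>i. c i \<omega> * f (\<omega> !! i)) \<in> borel_measurable pathS"
  by measurable

lemma gen_meas[measurable]:
  assumes [measurable]: "f \<in> borel_measurable borel"
  shows "gen P c f \<in> borel_measurable borel"
  unfolding gen_def[abs_def] by measurable

lemma gen_add:
  assumes [measurable]: "f \<in> borel_measurable borel" "g \<in> borel_measurable borel"
  shows "gen P c (\<lambda>x. f x + g x) x = gen P c f x + gen P c g x"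
proof -
  have "gen P c (\<lambda>x. f x + g x) x = (\<integral>\<^sup>+\<omega>. (\<Sum>i. c i \<omega> * f (\<omega> !! i)) + (\<Sum>i. c i \<omega> * g (\<omega> !! i)) \<partial>P x)"
    unfolding gen_def by (simp add: distrib_left suminf_add[OF summableI summableI])
  also have "\<dots> = gen P c f x + gen P c g x"
    unfolding gen_def by (rule nn_integral_add) auto
  finally show ?thesis .
qed

lemma gen_cmult:
  assumes [measurable]: "f \<in> borel_measurable borel"
  shows "gen P c (\<lambda>x. k * f x) x = k * gen P c f x"
proof -
  have "gen P c (\<lambda>x. k * f x) x = (\<integral>\<^sup>+\<omega>. k * (\<Sum>i. c i \<omega> * f (\<omega> !! i)) \<partial>P x)"
    unfolding gen_def by (simp add: mult.left_commute)
  also have "\<dots> = k * gen P c f x"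
    unfolding gen_def by (rule nn_integral_cmult) auto
  finally show ?thesis .
qed

lemma gen_mono: "(\<And>x. f x \<le> g x) \<Longrightarrow> gen P c f x \<le> gen P c g x"
  unfolding gen_def
  by (intro nn_integral_mono suminf_le summableI mult_left_mono) auto

lemma gen_zero[simp]: "gen P c (\<lambda>_. 0) x = 0"
  unfolding gen_def by simp

lemma gen_SUP:
  assumes [measurable]: "\<And>i. U i \<in> borel_measurable borel" and inc: "incseq U"
  shows "gen P c (\<lambda>x. SUP i. U i x) x = (SUP i. gen P c (U i) x)"
proof -
  have incU: "U n y \<le> U (Suc n) y" for n y using incseq_SucD[OF inc, of n] by (simp add: le_fun_def)
  have "gen P c (\<lambda>x. SUP i. U i x) x = (\<integral>\<^sup>+\<omega>. (SUP n. \<Sum>i. c i \<omega> * U n (\<omega> !! i)) \<partial>P x)"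
    unfolding gen_def
  proof (intro nn_integral_cong)
    fix \<omega>
    have "(\<Sum>i. c i \<omega> * (SUP n. U n (\<omega> !! i))) = (\<Sum>i. SUP n. c i \<omega> * U n (\<omega> !! i))"
      by (simp add: SUP_mult_left_ennreal)
    also have "\<dots> = (SUP n. \<Sum>i. c i \<omega> * U n (\<omega> !! i))"
      by (rule ennreal_suminf_SUP_eq) (auto intro!: incseq_SucI mult_left_mono incU)
    finally show "(\<Sum>i. c i \<omega> * (SUP n. U n (\<omega> !! i))) = (SUP n. \<Sum>i. c i \<omega> * U n (\<omega> !! i))" .
  qed
  also have "\<dots> = (SUP n. gen P c (U n) x)"
    unfolding gen_def
    by (rule nn_integral_monotone_convergence_SUP)
       (auto intro!: incseq_SucI le_funI suminf_le summableI mult_left_mono incU)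
  finally show ?thesis .
qed

lemma gen_sum:
  assumes [measurable]: "\<And>n. f n \<in> borel_measurable borel"
  shows "gen P c (\<lambda>x. \<Sum>n<(N::nat). f n x) x = (\<Sum>n<N. gen P c (f n) x)"
proof (induction N)
  case 0 then show ?case by simp
next
  case (Suc N)
  have "gen P c (\<lambda>x. \<Sum>n<Suc N. f n x) x = gen P c (\<lambda>x. (\<Sum>n<N. f n x) + f N x) x" by simp
  also have "\<dots> = gen P c (\<lambda>x. \<Sum>n<N. f n x) x + gen P c (f N) x"
    by (rule gen_add) auto
  finally show ?case using Suc by simp
qed

lemma gen_suminf:
  assumes [measurable]: "\<And>n. f n \<in> borel_measurable borel"
  shows "gen P c (\<lambda>x. \<Sum>n. f n x) x = (\<Sum>n. gen P c (f n) x)"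
proof -
  have "gen P c (\<lambda>x. \<Sum>n. f n x) x = gen P c (\<lambda>x. SUP N. (\<lambda>N x. \<Sum>n<N. f n x) N x) x"
    by (simp add: suminf_eq_SUP)
  also have "\<dots> = (SUP N. gen P c (\<lambda>x. \<Sum>n<N. f n x) x)"
    by (rule gen_SUP) (auto intro!: incseq_SucI le_funI)
  also have "\<dots> = (\<Sum>n. gen P c (f n) x)"
    by (simp add: gen_sum suminf_eq_SUP)
  finally show ?thesis .
qed

lemma star_emeasure:
  assumes ms: "sets m = sets borel" and A: "A \<in> sets borel"
  shows "emeasure (star_op (gen P c) m) A = (\<integral>\<^sup>+x. gen P c (indicator A) x \<partial>m)"
  unfolding star_op_def
proof (rule emeasure_measure_of_sigma[OF sets.sigma_algebra_axioms _ _ A])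
  show "positive (sets borel) (\<lambda>A. \<integral>\<^sup>+ x. gen P c (indicator A) x \<partial>m)"
  proof -
    have "(\<integral>\<^sup>+x. gen P c (indicator {}) x \<partial>m) = (\<integral>\<^sup>+x. 0 \<partial>m)"
      by (rule nn_integral_cong) (simp add: gen_def)
    then show ?thesis unfolding positive_def by simp
  qed
  show "countably_additive (sets borel) (\<lambda>A. \<integral>\<^sup>+ x. gen P c (indicator A) x \<partial>m)"
    unfolding countably_additive_def
  proof (intro allI impI)
    fix B :: "nat \<Rightarrow> 'a set" assume B: "range B \<subseteq> sets borel" "disjoint_family B"
    have [measurable]: "\<And>i. B i \<in> sets borel" using B by auto
    note ms[measurable_cong]
    have "(\<Sum>i. \<integral>\<^sup>+ x. gen P c (indicator (B i)) x \<partial>m) = (\<integral>\<^sup>+ x. (\<Sum>i. gen P c (indicator (B i)) x) \<partial>m)"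
      by (rule nn_integral_suminf[symmetric]) measurable
    also have "\<dots> = (\<integral>\<^sup>+ x. gen P c (\<lambda>y. \<Sum>i. indicator (B i) y) x \<partial>m)"
      by (subst gen_suminf) auto
    also have "\<dots> = (\<integral>\<^sup>+ x. gen P c (indicator (\<Union>i. B i)) x \<partial>m)"
      using suminf_indicator[OF B(2)] by simp
    finally show "(\<Sum>i. \<integral>\<^sup>+ x. gen P c (indicator (B i)) x \<partial>m) = (\<integral>\<^sup>+ x. gen P c (indicator (\<Union> (range B))) x \<partial>m)" .
  qed
qed

lemma meas_star: "f \<in> borel_measurable borel \<Longrightarrow> f \<in> borel_measurable (star_op T m)"
  by (simp add: measurable_cong_sets[OF sets_star refl])

lemma meas_m:
  assumes "sets m = sets borel" "f \<in> borel_measurable borel"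
  shows "f \<in> borel_measurable m"
  by (subst measurable_cong_sets[OF assms(1) refl]) (rule assms(2))

lemma star_int:
  assumes ms: "sets m = sets borel" and g: "g \<in> borel_measurable borel"
  shows "(\<integral>\<^sup>+x. g x \<partial>star_op (gen P c) m) = (\<integral>\<^sup>+x. gen P c g x \<partial>m)"
  using g
proof (induct rule: borel_measurable_induct)
  case (cong f g)
  then have "f = g" by auto
  with cong show ?case by simp
next
  case (set A)
  then show ?case
    using star_emeasure[OF ms set] by (simp add: nn_integral_indicator sets_star)
next
  case (mult u k)
  have um: "u \<in> borel_measurable borel" by fact
  have "(\<integral>\<^sup>+x. k * u x \<partial>star_op (gen P c) m) = k * (\<integral>\<^sup>+x. u x \<partial>star_op (gen P c) m)"
    by (rule nn_integral_cmult) (rule meas_star[OF um])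
  also have "\<dots> = k * (\<integral>\<^sup>+x. gen P c u x \<partial>m)" using mult by simp
  also have "\<dots> = (\<integral>\<^sup>+x. k * gen P c u x \<partial>m)"
    by (rule nn_integral_cmult[symmetric]) (rule meas_m[OF ms gen_meas[OF um]])
  also have "\<dots> = (\<integral>\<^sup>+x. gen P c (\<lambda>x. k * u x) x \<partial>m)"
    using um by (simp add: gen_cmult)
  finally show ?case .
next
  case (add u v)
  have um: "u \<in> borel_measurable borel" and vm: "v \<in> borel_measurable borel" by fact+
  have "(\<integral>\<^sup>+x. v x + u x \<partial>star_op (gen P c) m) = (\<integral>\<^sup>+x. v x \<partial>star_op (gen P c) m) + (\<integral>\<^sup>+x. u x \<partial>star_op (gen P c) m)"
    by (rule nn_integral_add) (rule meas_star, fact)+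
  also have "\<dots> = (\<integral>\<^sup>+x. gen P c v x \<partial>m) + (\<integral>\<^sup>+x. gen P c u x \<partial>m)" using add by simp
  also have "\<dots> = (\<integral>\<^sup>+x. gen P c v x + gen P c u x \<partial>m)"
    by (rule nn_integral_add[symmetric]) (rule meas_m[OF ms gen_meas], fact)+
  also have "\<dots> = (\<integral>\<^sup>+x. gen P c (\<lambda>x. v x + u x) x \<partial>m)"
    using um vm by (simp add: gen_add)
  finally show ?case .
next
  case (seq U)
  have Um: "\<And>i. U i \<in> borel_measurable borel" by fact
  have inc: "incseq U" by fact
  have "(\<integral>\<^sup>+x. (SUP i. U i) x \<partial>star_op (gen P c) m) = (SUP i. \<integral>\<^sup>+x. U i x \<partial>star_op (gen P c) m)"
    unfolding SUP_apply by (rule nn_integral_monotone_convergence_SUP[OF inc meas_star[OF Um]])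
  also have "\<dots> = (SUP i. \<integral>\<^sup>+x. gen P c (U i) x \<partial>m)" using seq by simp
  also have "\<dots> = (\<integral>\<^sup>+x. (SUP i. gen P c (U i) x) \<partial>m)"
  proof (rule nn_integral_monotone_convergence_SUP[symmetric])
    show "incseq (\<lambda>i. gen P c (U i))"
      using inc by (auto intro!: incseq_SucI le_funI gen_mono dest: incseq_SucD le_funD)
    show "\<And>i. gen P c (U i) \<in> borel_measurable m" by (rule meas_m[OF ms gen_meas[OF Um]])
  qed
  also have "\<dots> = (\<integral>\<^sup>+x. gen P c (SUP i. U i) x \<partial>m)"
    unfolding SUP_apply using Um inc by (simp add: gen_SUP)
  finally show ?case .
qed

end
end

context mk
begin

lemma snth0: "AE \<omega> in P x. \<omega> !! 0 = x"
proof -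
  have s: "{\<omega>::'a stream. \<omega> !! 0 \<noteq> x} \<in> sets pathS"
    using measurable_sets[OF measurable_snth[of 0 "borel::'a measure"], of "-{x}"]
    by (simp add: space_stream_space vimage_def borel_open open_Compl)
  have "emeasure (P x) {\<omega>. \<omega> !! 0 \<noteq> x} = (\<integral>\<^sup>+\<omega>. indicator {\<omega>. \<omega> !! 0 \<noteq> x} \<omega> \<partial>P x)"
    using s by (simp add: Psets)
  also have "\<dots> = (\<integral>\<^sup>+y. (\<integral>\<^sup>+\<omega>. indicator {\<omega>. \<omega> !! 0 \<noteq> x} (x ## \<omega>) \<partial>P y) \<partial>K x)"
    using s by (intro bind_int) simp
  also have "\<dots> = 0" by (simp add: indicator_def)
  finally show ?thesis
    by (subst AE_iff_measurable[OF _ refl]) (use s Psets in auto)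
qed

lemma tau_ne0: "AE \<omega> in P x. \<tau> \<omega> \<noteq> 0"
proof -
  interpret prob_space "P x" by (rule Pprob)
  have "measure (P x) {\<omega> \<in> space (P x). \<tau> \<omega> = 0} = 0"
    using compat unfolding theta_compatible_def by auto
  then have "emeasure (P x) {\<omega>. \<tau> \<omega> = 0} = 0"
    by (simp add: emeasure_eq_measure)
  then show ?thesis
    by (subst AE_iff_measurable[OF _ refl]) (auto simp: Psets)
qed

lemma compatAE: "AE \<omega> in P x. 2 \<le> \<tau> \<omega> \<longrightarrow> \<tau> (stl \<omega>) = \<tau> \<omega> - 1"
  using compat unfolding theta_compatible_def by auto

lemma det1:
  fixes E :: "'a stream set"
  assumes E: "E \<in> sets (nat_filtration 1)" and eq: "\<omega> !! 0 = \<eta> !! 0" "\<omega> !! 1 = \<eta> !! 1"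
  shows "\<omega> \<in> E \<longleftrightarrow> \<eta> \<in> E"
proof -
  let ?G = "{(\<lambda>\<omega>. \<omega> !! i) -` A \<inter> space pathS | i A. enat i \<le> 1 \<and> A \<in> sets (borel::'a measure)}"
  have "?G \<subseteq> Pow (space pathS)" by auto
  then have "E \<in> sigma_sets (space pathS) ?G"
    using E unfolding nat_filtration_def by (simp add: sets_measure_of)
  then show ?thesis
  proof (induct rule: sigma_sets.induct)
    case (Basic a)
    then obtain i A where "a = (\<lambda>\<omega>. \<omega> !! i) -` A \<inter> space pathS" "enat i \<le> 1" by auto
    moreover have "i = 0 \<or> i = 1" using \<open>enat i \<le> 1\<close> by (cases i) (auto simp: one_enat_def)
    ultimately show ?case using eq by (auto simp: space_stream_space)
  next
    case Empty then show ?case by simp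
  next
    case (Compl a) then show ?case by (auto simp: space_stream_space)
  next
    case (Union a) then show ?case by auto
  qed
qed

lemma tau2_det:
  assumes "\<omega> !! 0 = \<eta> !! 0" "\<omega> !! 1 = \<eta> !! 1"
  shows "(2 \<le> \<tau> \<omega>) \<longleftrightarrow> (2 \<le> \<tau> \<eta>)"
proof -
  have "{\<omega> \<in> space (nat_filtration 1). \<tau> \<omega> \<le> 1} \<in> sets (nat_filtration 1)"
    using stopping_timeD[OF stop, of 1] by (simp add: pred_def)
  then have "{\<omega>. \<tau> \<omega> \<le> 1} \<in> sets (nat_filtration 1)"
    by (simp add: filt_space space_stream_space)
  from det1[OF this assms] have "(\<tau> \<omega> \<le> 1) \<longleftrightarrow> (\<tau> \<eta> \<le> 1)" by simp
  moreover have "(2 \<le> t) \<longleftrightarrow> \<not> t \<le> 1" for t :: enat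
    by (cases t) (auto simp: numeral_eq_enat one_enat_def)
  ultimately show ?thesis by simp
qed

end

lemma gen_single:
  assumes "\<And>i \<omega>. i \<noteq> j \<Longrightarrow> c i \<omega> = 0"
  shows "gen P c f x = (\<integral>\<^sup>+\<omega>. c j \<omega> * f (\<omega> !! j) \<partial>P x)"
  unfolding gen_def
  by (intro nn_integral_cong) (subst suminf_finite[of "{j}"], auto simp: assms)

lemma stream_snth1[simp]: "(x ## \<omega>) !! 1 = \<omega> !! 0"
  by (simp add: One_nat_def del: One_nat_def[symmetric])

context mk
begin

lemma Pm_int'[measurable (raw)]:
  assumes "g \<in> M \<rightarrow>\<^sub>M borel" "F \<in> borel_measurable pathS"
  shows "(\<lambda>\<omega>. \<integral>\<^sup>+\<eta>. F \<eta> \<partial>P (g \<omega>)) \<in> borel_measurable M"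
  by (rule measurable_compose[OF assms(1) Pm_int[OF assms(2)]])

definition cU :: "nat \<Rightarrow> 'a stream \<Rightarrow> ennreal" where
  "cU i \<omega> = (if i = 1 then indicator {\<omega>. 2 \<le> \<tau> \<omega>} \<omega> else 0)"
definition cS :: "nat \<Rightarrow> 'a stream \<Rightarrow> ennreal" where
  "cS i \<omega> = (if i = 1 then indicator {\<omega>. \<tau> \<omega> = 1} \<omega> else 0)"
definition cP :: "nat \<Rightarrow> 'a stream \<Rightarrow> ennreal" where
  "cP i \<omega> = (if i = 1 then 1 else 0)"
definition cQ :: "nat \<Rightarrow> 'a stream \<Rightarrow> ennreal" where
  "cQ i \<omega> = indicator {\<omega>. \<tau> \<omega> = enat i} \<omega>"
definition cR :: "nat \<Rightarrow> 'a stream \<Rightarrow> ennreal" where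
  "cR i \<omega> = indicator {\<omega>. enat i < \<tau> \<omega> \<and> \<tau> \<omega> < \<infinity>} \<omega>"

lemma cU_m[measurable]: "cU i \<in> borel_measurable pathS"
  unfolding cU_def[abs_def] by measurable
lemma cS_m[measurable]: "cS i \<in> borel_measurable pathS"
  unfolding cS_def[abs_def] by measurable
lemma cP_m[measurable]: "cP i \<in> borel_measurable pathS"
  unfolding cP_def[abs_def] by measurable
lemma cQ_m[measurable]: "cQ i \<in> borel_measurable pathS"
  unfolding cQ_def[abs_def] by measurable
lemma cR_m[measurable]: "cR i \<in> borel_measurable pathS"
  unfolding cR_def[abs_def] by measurable

lemma opP_gen: "opP P = gen P cP"
  by (intro ext, subst gen_single[where j=1]) (auto simp: cP_def opP_def)

lemma opS_gen: "opS P \<tau> = gen P cS"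
  by (intro ext, subst gen_single[where j=1]) (auto simp: cS_def opS_def mult.commute)

lemma opQ_gen: "opQ P \<tau> = gen P cQ"
proof (intro ext)
  fix f x
  show "opQ P \<tau> f x = gen P cQ f x"
    unfolding opQ_def gen_def
  proof (intro nn_integral_cong)
    fix \<omega>
    show "f (\<omega> !! the_enat (\<tau> \<omega>)) * indicator {\<omega>. \<tau> \<omega> < \<infinity>} \<omega> = (\<Sum>i. cQ i \<omega> * f (\<omega> !! i))"
    proof (cases "\<tau> \<omega>")
      case (enat k)
      then show ?thesis
        by (subst suminf_finite[of "{k}"]) (auto simp: cQ_def)
    next
      case infinity then show ?thesis by (simp add: cQ_def)
    qed
  qed
qed

lemma opR_gen: "opR P \<tau> = gen P cR"
proof (intro ext)
  fix f x
  show "opR P \<tau> f x = gen P cR f x"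
    unfolding opR_def gen_def
  proof (intro nn_integral_cong)
    fix \<omega>
    show "(\<Sum>i<the_enat (\<tau> \<omega>). f (\<omega> !! i)) * indicator {\<omega>. \<tau> \<omega> < \<infinity>} \<omega> = (\<Sum>i. cR i \<omega> * f (\<omega> !! i))"
    proof (cases "\<tau> \<omega>")
      case (enat k)
      then show ?thesis
        by (subst suminf_finite[of "{..<k}"]) (auto simp: cR_def)
    next
      case infinity then show ?thesis by (simp add: cR_def)
    qed
  qed
qed

lemma markov:
  assumes F[measurable]: "F \<in> borel_measurable pathS"
  shows "(\<integral>\<^sup>+\<omega>. indicator {\<omega>. 2 \<le> \<tau> \<omega>} \<omega> * F (stl \<omega>) \<partial>P x) = gen P cU (\<lambda>y. \<integral>\<^sup>+\<omega>. F \<omega> \<partial>P y) x"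
proof -
  have U: "gen P cU (\<lambda>y. \<integral>\<^sup>+\<omega>. F \<omega> \<partial>P y) x = (\<integral>\<^sup>+\<omega>. indicator {\<omega>. 2 \<le> \<tau> \<omega>} \<omega> * (\<integral>\<^sup>+\<eta>. F \<eta> \<partial>P (\<omega> !! 1)) \<partial>P x)"
    by (subst gen_single[where j=1]) (auto simp: cU_def)
  have L: "(\<integral>\<^sup>+\<omega>. indicator {\<omega>. 2 \<le> \<tau> \<omega>} \<omega> * F (stl \<omega>) \<partial>P x) = (\<integral>\<^sup>+y. \<integral>\<^sup>+\<omega>. indicator {\<omega>. 2 \<le> \<tau> \<omega>} (x ## \<omega>) * F \<omega> \<partial>P y \<partial>K x)"
    by (subst bind_int) auto
  have R: "(\<integral>\<^sup>+\<omega>. indicator {\<omega>. 2 \<le> \<tau> \<omega>} \<omega> * (\<integral>\<^sup>+\<eta>. F \<eta> \<partial>P (\<omega> !! 1)) \<partial>P x) = (\<integral>\<^sup>+y. \<integral>\<^sup>+\<omega>. indicator {\<omega>. 2 \<le> \<tau> \<omega>} (x ## \<omega>) * (\<integral>\<^sup>+\<eta>. F \<eta> \<partial>P (\<omega> !! 0)) \<partial>P y \<partial>K x)"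
    by (subst bind_int) auto
  have inner: "(\<integral>\<^sup>+\<omega>. indicator {\<omega>. 2 \<le> \<tau> \<omega>} (x ## \<omega>) * F \<omega> \<partial>P y) = (\<integral>\<^sup>+\<omega>. indicator {\<omega>. 2 \<le> \<tau> \<omega>} (x ## \<omega>) * (\<integral>\<^sup>+\<eta>. F \<eta> \<partial>P (\<omega> !! 0)) \<partial>P y)" for y
  proof -
    define \<phi> where "\<phi> = (indicator {\<omega>. 2 \<le> \<tau> \<omega>} (x ## y ## sconst x) :: ennreal)"
    have ae: "AE \<omega> in P y. indicator {\<omega>. 2 \<le> \<tau> \<omega>} (x ## \<omega>) = \<phi> \<and> \<omega> !! 0 = y"
      using snth0[of y]
    proof eventually_elim
      case (elim \<omega>)
      then have "(2 \<le> \<tau> (x ## \<omega>)) \<longleftrightarrow> (2 \<le> \<tau> (x ## y ## sconst x))"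
        by (intro tau2_det) auto
      then show ?case using elim by (simp add: \<phi>_def indicator_def)
    qed
    have "(\<integral>\<^sup>+\<omega>. indicator {\<omega>. 2 \<le> \<tau> \<omega>} (x ## \<omega>) * F \<omega> \<partial>P y) = (\<integral>\<^sup>+\<omega>. \<phi> * F \<omega> \<partial>P y)"
      by (rule nn_integral_cong_AE) (use ae in auto)
    also have "\<dots> = \<phi> * (\<integral>\<^sup>+\<omega>. F \<omega> \<partial>P y)"
      by (rule nn_integral_cmult) (simp add: measurable_ident_sets[OF Psets])
    also have "\<dots> = (\<integral>\<^sup>+\<omega>. \<phi> * (\<integral>\<^sup>+\<eta>. F \<eta> \<partial>P y) \<partial>P y)"
      using prob_space.emeasure_space_1[OF Pprob] by simp
    also have "\<dots> = (\<integral>\<^sup>+\<omega>. indicator {\<omega>. 2 \<le> \<tau> \<omega>} (x ## \<omega>) * (\<integral>\<^sup>+\<eta>. F \<eta> \<partial>P (\<omega> !! 0)) \<partial>P y)"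
      by (rule nn_integral_cong_AE) (use ae in auto)
    finally show ?thesis .
  qed
  have "(\<integral>\<^sup>+\<omega>. indicator {\<omega>. 2 \<le> \<tau> \<omega>} \<omega> * F (stl \<omega>) \<partial>P x) = (\<integral>\<^sup>+y. \<integral>\<^sup>+\<omega>. indicator {\<omega>. 2 \<le> \<tau> \<omega>} (x ## \<omega>) * F \<omega> \<partial>P y \<partial>K x)"
    by (rule L)
  also have "\<dots> = (\<integral>\<^sup>+y. \<integral>\<^sup>+\<omega>. indicator {\<omega>. 2 \<le> \<tau> \<omega>} (x ## \<omega>) * (\<integral>\<^sup>+\<eta>. F \<eta> \<partial>P (\<omega> !! 0)) \<partial>P y \<partial>K x)"
    by (intro nn_integral_cong inner)
  also have "\<dots> = (\<integral>\<^sup>+\<omega>. indicator {\<omega>. 2 \<le> \<tau> \<omega>} \<omega> * (\<integral>\<^sup>+\<eta>. F \<eta> \<partial>P (\<omega> !! 1)) \<partial>P x)"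
    by (rule R[symmetric])
  also have "\<dots> = gen P cU (\<lambda>y. \<integral>\<^sup>+\<omega>. F \<omega> \<partial>P y) x"
    by (rule U[symmetric])
  finally show ?thesis .
qed

end

lemma enat_a: "(t::enat) \<noteq> 0 \<Longrightarrow> (2 \<le> t \<longrightarrow> s = t - 1) \<Longrightarrow> (enat (Suc n) < t) = (2 \<le> t \<and> enat n < s)"
  by (cases t; cases s) (auto simp: numeral_eq_enat one_enat_def)

lemma enat_b: "(t::enat) \<noteq> 0 \<Longrightarrow> (2 \<le> t \<longrightarrow> s = t - 1) \<Longrightarrow> (t = enat (Suc (Suc n))) = (2 \<le> t \<and> s = enat (Suc n))"
  by (cases t; cases s) (auto simp: numeral_eq_enat one_enat_def)

lemma enat_c: "(t::enat) \<noteq> 0 \<Longrightarrow> (2 \<le> t \<or> t = 1) \<and> \<not> (2 \<le> t \<and> t = 1)"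
  by (cases t) (auto simp: numeral_eq_enat one_enat_def zero_enat_def)

context mk
begin

definition a :: "nat \<Rightarrow> ('a \<Rightarrow> ennreal) \<Rightarrow> 'a \<Rightarrow> ennreal" where
  "a n f x = (\<integral>\<^sup>+\<omega>. indicator {\<omega>. enat n < \<tau> \<omega>} \<omega> * f (\<omega> !! n) \<partial>P x)"
definition b :: "nat \<Rightarrow> ('a \<Rightarrow> ennreal) \<Rightarrow> 'a \<Rightarrow> ennreal" where
  "b n f x = (\<integral>\<^sup>+\<omega>. indicator {\<omega>. \<tau> \<omega> = enat (Suc n)} \<omega> * f (\<omega> !! Suc n) \<partial>P x)"

lemma a0: "a 0 f x = f x"
proof -
  have "a 0 f x = (\<integral>\<^sup>+\<omega>. f x \<partial>P x)"
    unfolding a_def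
    by (rule nn_integral_cong_AE) (use snth0[of x] tau_ne0[of x] in \<open>eventually_elim, auto simp: zero_enat_def[symmetric]\<close>)
  then show ?thesis using prob_space.emeasure_space_1[OF Pprob] by simp
qed

lemma aS:
  assumes [measurable]: "f \<in> borel_measurable borel"
  shows "a (Suc n) f x = gen P cU (a n f) x"
proof -
  have "a (Suc n) f x = (\<integral>\<^sup>+\<omega>. indicator {\<omega>. 2 \<le> \<tau> \<omega>} \<omega> * (indicator {\<omega>. enat n < \<tau> \<omega>} (stl \<omega>) * f (stl \<omega> !! n)) \<partial>P x)"
    unfolding a_def
    by (rule nn_integral_cong_AE) (use tau_ne0[of x] compatAE[of x] in \<open>eventually_elim, auto simp: indicator_def enat_a\<close>)
  also have "\<dots> = gen P cU (\<lambda>y. \<integral>\<^sup>+\<omega>. indicator {\<omega>. enat n < \<tau> \<omega>} \<omega> * f (\<omega> !! n) \<partial>P y) x"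
    by (rule markov) measurable
  finally show ?thesis by (simp add: a_def[abs_def])
qed

lemma b0: "b 0 f x = gen P cS f x"
  by (subst gen_single[where j=1]) (auto simp: cS_def b_def one_enat_def)

lemma bS:
  assumes [measurable]: "f \<in> borel_measurable borel"
  shows "b (Suc n) f x = gen P cU (b n f) x"
proof -
  have "b (Suc n) f x = (\<integral>\<^sup>+\<omega>. indicator {\<omega>. 2 \<le> \<tau> \<omega>} \<omega> * (indicator {\<omega>. \<tau> \<omega> = enat (Suc n)} (stl \<omega>) * f (stl \<omega> !! Suc n)) \<partial>P x)"
    unfolding b_def
    by (rule nn_integral_cong_AE) (use tau_ne0[of x] compatAE[of x] in \<open>eventually_elim, auto simp: indicator_def enat_b\<close>)
  also have "\<dots> = gen P cU (\<lambda>y. \<integral>\<^sup>+\<omega>. indicator {\<omega>. \<tau> \<omega> = enat (Suc n)} \<omega> * f (\<omega> !! Suc n) \<partial>P y) x"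
    by (rule markov) measurable
  finally show ?thesis by (simp add: b_def[abs_def])
qed

lemma a_iter:
  assumes [measurable]: "f \<in> borel_measurable borel"
  shows "a n f = (gen P cU ^^ n) f"
proof (induction n)
  case 0 then show ?case by (auto simp: a0)
next
  case (Suc n) show ?case by (rule ext) (simp only: aS[OF assms] Suc.IH funpow.simps o_apply)
qed

lemma b_iter:
  assumes [measurable]: "f \<in> borel_measurable borel"
  shows "b n f = (gen P cU ^^ n) (gen P cS f)"
proof (induction n)
  case 0 then show ?case by (auto simp: b0)
next
  case (Suc n) show ?case by (rule ext) (simp only: bS[OF assms] Suc.IH funpow.simps o_apply)
qed

lemma R_sum:
  assumes [measurable]: "f \<in> borel_measurable borel"
  shows "gen P cR f x = (\<Sum>n. a n f x)"
proof -
  have "gen P cR f x = (\<Sum>i. \<integral>\<^sup>+\<omega>. cR i \<omega> * f (\<omega> !! i) \<partial>P x)"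
    unfolding gen_def by (rule nn_integral_suminf) measurable
  also have "\<dots> = (\<Sum>n. a n f x)"
    unfolding a_def
    by (intro suminf_cong nn_integral_cong_AE) (use fin[of x] in \<open>eventually_elim, auto simp: cR_def indicator_def\<close>)
  finally show ?thesis .
qed

lemma Q_sum:
  assumes [measurable]: "f \<in> borel_measurable borel"
  shows "gen P cQ f x = (\<Sum>n. b n f x)"
proof -
  have "gen P cQ f x = (\<Sum>i. \<integral>\<^sup>+\<omega>. cQ i \<omega> * f (\<omega> !! i) \<partial>P x)"
    unfolding gen_def by (rule nn_integral_suminf) measurable
  also have "\<dots> = (\<Sum>j. \<integral>\<^sup>+\<omega>. cQ (j + 1) \<omega> * f (\<omega> !! (j + 1)) \<partial>P x) + (\<Sum>j<1. \<integral>\<^sup>+\<omega>. cQ j \<omega> * f (\<omega> !! j) \<partial>P x)"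
    by (rule suminf_offset) (rule summableI)
  also have "(\<Sum>j<1. \<integral>\<^sup>+\<omega>. cQ j \<omega> * f (\<omega> !! j) \<partial>P x) = 0"
  proof -
    have "(\<integral>\<^sup>+\<omega>. cQ 0 \<omega> * f (\<omega> !! 0) \<partial>P x) = (\<integral>\<^sup>+\<omega>. 0 \<partial>P x)"
      by (rule nn_integral_cong_AE) (use tau_ne0[of x] in \<open>eventually_elim, auto simp: cQ_def zero_enat_def[symmetric]\<close>)
    then show ?thesis by simp
  qed
  also have "(\<Sum>j. \<integral>\<^sup>+\<omega>. cQ (j + 1) \<omega> * f (\<omega> !! (j + 1)) \<partial>P x) = (\<Sum>n. b n f x)"
    by (simp add: b_def cQ_def)
  finally show ?thesis by simp
qed

lemma QRS:
  assumes [measurable]: "f \<in> borel_measurable borel"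
  shows "gen P cQ f x = gen P cR (gen P cS f) x"
  by (simp add: Q_sum R_sum a_iter b_iter)

lemma RU:
  assumes [measurable]: "f \<in> borel_measurable borel"
  shows "gen P cR f x = f x + gen P cR (gen P cU f) x"
proof -
  have "gen P cR f x = (\<Sum>n. (gen P cU ^^ n) f x)" by (simp add: R_sum a_iter)
  also have "\<dots> = (\<Sum>j. (gen P cU ^^ (j + 1)) f x) + (\<Sum>j<1. (gen P cU ^^ j) f x)"
    by (rule suminf_offset) (rule summableI)
  also have "\<dots> = (\<Sum>j. (gen P cU ^^ j) (gen P cU f) x) + f x"
    by (simp add: funpow_Suc_right del: funpow.simps)
  also have "(\<Sum>j. (gen P cU ^^ j) (gen P cU f) x) = gen P cR (gen P cU f) x"
    by (simp add: R_sum a_iter)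
  finally show ?thesis by (simp add: add.commute)
qed

lemma PUS:
  assumes [measurable]: "f \<in> borel_measurable borel"
  shows "gen P cP f x = gen P cU f x + gen P cS f x"
proof -
  have "gen P cU f x + gen P cS f x = (\<integral>\<^sup>+\<omega>. indicator {\<omega>. 2 \<le> \<tau> \<omega>} \<omega> * f (\<omega> !! 1) \<partial>P x) + (\<integral>\<^sup>+\<omega>. indicator {\<omega>. \<tau> \<omega> = 1} \<omega> * f (\<omega> !! 1) \<partial>P x)"
  proof -
    have hU: "gen P cU f x = (\<integral>\<^sup>+\<omega>. indicator {\<omega>. 2 \<le> \<tau> \<omega>} \<omega> * f (\<omega> !! 1) \<partial>P x)"
      by (subst gen_single[where j=1]) (auto simp: cU_def)
    have hS: "gen P cS f x = (\<integral>\<^sup>+\<omega>. indicator {\<omega>. \<tau> \<omega> = 1} \<omega> * f (\<omega> !! 1) \<partial>P x)"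
      by (subst gen_single[where j=1]) (auto simp: cS_def)
    show ?thesis by (simp only: hU hS)
  qed
  also have "\<dots> = (\<integral>\<^sup>+\<omega>. indicator {\<omega>. 2 \<le> \<tau> \<omega>} \<omega> * f (\<omega> !! 1) + indicator {\<omega>. \<tau> \<omega> = 1} \<omega> * f (\<omega> !! 1) \<partial>P x)"
    by (rule nn_integral_add[symmetric]) measurable
  also have "\<dots> = (\<integral>\<^sup>+\<omega>. f (\<omega> !! 1) \<partial>P x)"
    by (rule nn_integral_cong_AE) (use tau_ne0[of x] in \<open>eventually_elim, use enat_c in \<open>auto simp: indicator_def\<close>\<close>)
  also have "\<dots> = gen P cP f x"
    by (subst gen_single[where j=1]) (auto simp: cP_def)
  finally show ?thesis ..
qed

end

theorem mainTheorem9: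
  fixes K :: "'a::polish_space \<Rightarrow> 'a measure"
    and P :: "'a \<Rightarrow> 'a stream measure"
    and \<tau> :: "'a stream \<Rightarrow> enat"
    and \<nu> :: "'a measure"
  assumes chain: "markov_law K P"
    and stop: "stopping_time nat_filtration \<tau>"
    and compat: "theta_compatible P \<tau>"
    and int_tau: "\<And>x. (\<integral>\<^sup>+\<omega>. ennreal_of_enat (\<tau> \<omega>) \<partial>P x) < \<infinity>"
    and nu_borel: "sets \<nu> = sets borel"
    and nu_nonzero: "emeasure \<nu> (space \<nu>) \<noteq> 0"
    and nu_inv: "invariant_for (opQ P \<tau>) \<nu>"
  shows "invariant_for (opP P) (star_op (opR P \<tau>) \<nu>)
       \<and> emeasure (star_op (opR P \<tau>) \<nu>) (space (star_op (opR P \<tau>) \<nu>)) \<noteq> 0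
       \<and> star_op (opS P \<tau>) (star_op (opR P \<tau>) \<nu>) = \<nu>
       \<and> absolutely_continuous (star_op (opR P \<tau>) \<nu>) \<nu>
       \<and> ((\<exists>C::real. \<forall>x. opQ P \<tau> (opR P \<tau> (\<lambda>_. 1)) x \<le> ennreal C) \<longrightarrow>
            (emeasure (star_op (opR P \<tau>) \<nu>) (space (star_op (opR P \<tau>) \<nu>)) < \<infinity>
             \<longleftrightarrow> emeasure \<nu> (space \<nu>) < \<infinity>))"
proof -
  have fin: "AE \<omega> in P x. \<tau> \<omega> \<noteq> \<infinity>" for x
  proof -
    have Psets': "sets (P x) = sets pathS"
    proof -
      have "P \<in> borel \<rightarrow>\<^sub>M prob_algebra pathS" using chain unfolding markov_law_def by blast
      from measurable_space[OF this, of x] show ?thesis by (simp add: space_prob_algebra)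
    qed
    have tm: "\<tau> \<in> pathS \<rightarrow>\<^sub>M count_space UNIV"
    proof -
      have "space (nat_filtration t) = space pathS" for t
        unfolding nat_filtration_def by (rule space_measure_of) (auto dest: sets.sets_into_space[OF measurable_sets[OF measurable_snth]])
      moreover have "sets (nat_filtration t) \<subseteq> sets pathS" for t
        unfolding nat_filtration_def
        by (rule order_trans[OF sets_measure_of_conv[THEN eq_refl]])
           (auto intro!: sets.sigma_sets_subset measurable_sets[OF measurable_snth])
      ultimately have "\<tau> \<in> pathS \<rightarrow>\<^sub>M borel"
        by (intro measurable_stopping_time[OF stop]) auto
      then show ?thesis
        unfolding measurable_count_space_eq2_countable
        using measurable_sets[OF _ borel_closed[OF closed_singleton]] by auto
    qed
    have m: "(\<lambda>\<omega>. ennreal_of_enat (\<tau> \<omega>)) \<in> borel_measurable (P x)"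
    proof -
      have tmP: "\<tau> \<in> P x \<rightarrow>\<^sub>M count_space UNIV"
        by (subst measurable_cong_sets[OF Psets' refl]) (rule tm)
      show ?thesis by (rule measurable_compose[OF tmP]) simp
    qed
    have "AE \<omega> in P x. ennreal_of_enat (\<tau> \<omega>) \<noteq> \<infinity>"
      by (rule nn_integral_noteq_infinite[OF m]) (use int_tau[of x] in auto)
    then show ?thesis
    proof eventually_elim
      case (elim \<omega>)
      then show ?case by (cases "\<tau> \<omega>") auto
    qed
  qed
  interpret mk K P \<tau>
    using chain stop compat fin by unfold_locales auto
  have nu_space[simp]: "space \<nu> = UNIV"
    using sets_eq_imp_space_eq[OF nu_borel] by simp
  note nu_borel[measurable_cong]
  define Rn where "Rn = star_op (gen P cR) \<nu>"
  have Rn_sets[measurable_cong]: "sets Rn = sets borel" unfolding Rn_def by (rule sets_star)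
  have int_R: "\<And>g. g \<in> borel_measurable borel \<Longrightarrow> (\<integral>\<^sup>+x. g x \<partial>Rn) = (\<integral>\<^sup>+x. gen P cR g x \<partial>\<nu>)"
    unfolding Rn_def by (rule star_int[where c=cR, OF cR_m nu_borel])
  have Qnu: "star_op (gen P cQ) \<nu> = \<nu>"
  proof (rule measure_eqI)
    show "sets (star_op (gen P cQ) \<nu>) = sets \<nu>" by (simp add: sets_star nu_borel)
    fix A assume "A \<in> sets (star_op (gen P cQ) \<nu>)"
    then have A: "A \<in> sets borel" by (simp add: sets_star)
    show "emeasure (star_op (gen P cQ) \<nu>) A = emeasure \<nu> A"
      using star_emeasure[where c=cQ, OF cQ_m nu_borel A] nu_inv A unfolding invariant_for_def opQ_gen by simp
  qed
  have int_Q: "\<And>g. g \<in> borel_measurable borel \<Longrightarrow> (\<integral>\<^sup>+x. g x \<partial>\<nu>) = (\<integral>\<^sup>+x. gen P cQ g x \<partial>\<nu>)"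
  proof -
    fix g :: "'a \<Rightarrow> ennreal" assume g: "g \<in> borel_measurable borel"
    have "(\<integral>\<^sup>+x. g x \<partial>\<nu>) = (\<integral>\<^sup>+x. g x \<partial>star_op (gen P cQ) \<nu>)" by (simp only: Qnu)
    also have "\<dots> = (\<integral>\<^sup>+x. gen P cQ g x \<partial>\<nu>)" by (rule star_int[where c=cQ, OF cQ_m nu_borel g])
    finally show "(\<integral>\<^sup>+x. g x \<partial>\<nu>) = (\<integral>\<^sup>+x. gen P cQ g x \<partial>\<nu>)" .
  qed
  have Rge: "\<And>f x. f \<in> borel_measurable borel \<Longrightarrow> f x \<le> gen P cR f x"
    by (subst RU) auto
  have RnA: "\<And>A. A \<in> sets borel \<Longrightarrow> emeasure Rn A = (\<integral>\<^sup>+x. gen P cR (indicator A) x \<partial>\<nu>)"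
    unfolding Rn_def by (rule star_emeasure[where c=cR, OF cR_m nu_borel])
  have ge: "\<And>A. A \<in> sets borel \<Longrightarrow> emeasure \<nu> A \<le> emeasure Rn A"
  proof -
    fix A :: "'a set" assume A[measurable]: "A \<in> sets borel"
    have "emeasure \<nu> A = (\<integral>\<^sup>+x. indicator A x \<partial>\<nu>)" using A by (simp add: nu_borel)
    also have "\<dots> \<le> (\<integral>\<^sup>+x. gen P cR (indicator A) x \<partial>\<nu>)"
      by (intro nn_integral_mono Rge) auto
    finally show "emeasure \<nu> A \<le> emeasure Rn A" using RnA[OF A] by simp
  qed
  have part1: "invariant_for (gen P cP) Rn"
    unfolding invariant_for_def
  proof
    fix A :: "'a set" assume A[measurable]: "A \<in> sets borel"
    have eqP: "gen P cP (indicator A) = (\<lambda>x. gen P cU (indicator A) x + gen P cS (indicator A) x)"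
      by (rule ext, rule PUS) measurable
    have "(\<integral>\<^sup>+x. gen P cP (indicator A) x \<partial>Rn) = (\<integral>\<^sup>+x. gen P cR (gen P cP (indicator A)) x \<partial>\<nu>)"
      by (rule int_R) measurable
    also have "\<dots> = (\<integral>\<^sup>+x. gen P cR (\<lambda>x. gen P cU (indicator A) x + gen P cS (indicator A) x) x \<partial>\<nu>)"
      by (simp only: eqP)
    also have "(\<integral>\<^sup>+x. gen P cR (\<lambda>x. gen P cU (indicator A) x + gen P cS (indicator A) x) x \<partial>\<nu>)
        = (\<integral>\<^sup>+x. gen P cR (gen P cU (indicator A)) x + gen P cQ (indicator A) x \<partial>\<nu>)"
      by (intro nn_integral_cong) (simp add: gen_add QRS)
    also have "\<dots> = (\<integral>\<^sup>+x. gen P cR (gen P cU (indicator A)) x \<partial>\<nu>) + (\<integral>\<^sup>+x. gen P cQ (indicator A) x \<partial>\<nu>)"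
      by (rule nn_integral_add) measurable
    also have "(\<integral>\<^sup>+x. gen P cQ (indicator A) x \<partial>\<nu>) = (\<integral>\<^sup>+x. indicator A x \<partial>\<nu>)"
      by (rule int_Q[symmetric]) measurable
    also have "(\<integral>\<^sup>+x. gen P cR (gen P cU (indicator A)) x \<partial>\<nu>) + (\<integral>\<^sup>+x. indicator A x \<partial>\<nu>)
        = (\<integral>\<^sup>+x. indicator A x + gen P cR (gen P cU (indicator A)) x \<partial>\<nu>)"
    proof -
      have m1: "indicator A \<in> borel_measurable \<nu>" by (rule meas_m[where c=cR, OF cR_m nu_borel]) simp
      have m2: "gen P cR (gen P cU (indicator A)) \<in> borel_measurable \<nu>" by (rule meas_m[where c=cR, OF cR_m nu_borel]) measurable
      show ?thesis by (simp add: nn_integral_add[OF m1 m2] add.commute)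
    qed
    also have "\<dots> = (\<integral>\<^sup>+x. gen P cR (indicator A) x \<partial>\<nu>)"
      by (intro nn_integral_cong) (subst RU, auto)
    also have "\<dots> = emeasure Rn A" using RnA[OF A] by simp
    finally show "(\<integral>\<^sup>+x. gen P cP (indicator A) x \<partial>Rn) = emeasure Rn A" .
  qed
  have Rn_space[simp]: "space Rn = UNIV" unfolding Rn_def by simp
  have part2: "emeasure Rn UNIV \<noteq> 0"
    using ge[of UNIV] nu_nonzero by auto
  have part3: "star_op (gen P cS) Rn = \<nu>"
  proof (rule measure_eqI)
    show "sets (star_op (gen P cS) Rn) = sets \<nu>" by (simp add: sets_star nu_borel)
    fix A assume "A \<in> sets (star_op (gen P cS) Rn)"
    then have A[measurable]: "A \<in> sets borel" by (simp add: sets_star)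
    have "emeasure (star_op (gen P cS) Rn) A = (\<integral>\<^sup>+x. gen P cS (indicator A) x \<partial>Rn)"
      by (rule star_emeasure[where c=cS, OF cS_m Rn_sets A])
    also have "\<dots> = (\<integral>\<^sup>+x. gen P cR (gen P cS (indicator A)) x \<partial>\<nu>)"
      by (rule int_R) measurable
    also have "\<dots> = (\<integral>\<^sup>+x. gen P cQ (indicator A) x \<partial>\<nu>)"
      by (intro nn_integral_cong) (simp add: QRS)
    also have "\<dots> = (\<integral>\<^sup>+x. indicator A x \<partial>\<nu>)"
      by (rule int_Q[symmetric]) measurable
    also have "\<dots> = emeasure \<nu> A" using A by (simp add: nu_borel)
    finally show "emeasure (star_op (gen P cS) Rn) A = emeasure \<nu> A" .
  qed
  have part4: "absolutely_continuous Rn \<nu>"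
    unfolding absolutely_continuous_def
  proof
    fix A assume "A \<in> null_sets Rn"
    then have A: "A \<in> sets borel" "emeasure Rn A = 0" by (auto simp: Rn_sets)
    then have "emeasure \<nu> A = 0" using ge[OF A(1)] by simp
    then show "A \<in> null_sets \<nu>" using A by (simp add: null_sets_def nu_borel)
  qed
  have part5: "emeasure Rn UNIV < \<infinity> \<longleftrightarrow> emeasure \<nu> UNIV < \<infinity>"
    if C: "\<forall>x. gen P cQ (gen P cR (\<lambda>_. 1)) x \<le> ennreal C" for C
  proof
    assume "emeasure Rn UNIV < \<infinity>"
    then show "emeasure \<nu> UNIV < \<infinity>" using ge[of UNIV] by auto
  next
    assume nf: "emeasure \<nu> UNIV < \<infinity>"
    have "emeasure Rn UNIV = (\<integral>\<^sup>+x. gen P cR (indicator UNIV) x \<partial>\<nu>)" by (rule RnA) simp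
    also have "\<dots> = (\<integral>\<^sup>+x. gen P cR (\<lambda>_. 1) x \<partial>\<nu>)" by simp
    also have "\<dots> = (\<integral>\<^sup>+x. gen P cQ (gen P cR (\<lambda>_. 1)) x \<partial>\<nu>)"
      by (rule int_Q) measurable
    also have "\<dots> \<le> (\<integral>\<^sup>+x. ennreal C \<partial>\<nu>)"
      by (intro nn_integral_mono) (use C in auto)
    also have "\<dots> = ennreal C * emeasure \<nu> UNIV" by simp
    also have "\<dots> < \<infinity>" using nf by (simp add: ennreal_mult_less_top)
    finally show "emeasure Rn UNIV < \<infinity>" .
  qed
  show ?thesis
    unfolding opR_gen opP_gen opS_gen opQ_gen Rn_def[symmetric]
    using part1 part2 part3 part4 part5 by (simp only: Rn_space nu_space) blast
qed

end
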